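(* Consider a well-posed network $\Sigma$ and nonempty closed sets $\mathcal{A}_i\subset\mathbb{R}^{n_i}$, $i\in\mathbb{N}$, and let $\mathcal{A}:=\{x\in X: x_i\in\mathcal{A}_i\ \forall i\}$. Suppose $\Sigma$ is eISS with respect to $\mathcal{A}$. Then there exist $M\in\mathbb{N}$ and continuous functions $W_i:\mathbb{R}^{n_i}\to[0,\infty)$, $i\in\mathbb{N}$, together with $\underline\omega_i,\overline\omega_i\in\mathcal{K}_\infty$, $\gamma_{ij}\in\mathcal{K}_\infty\cup\{0\}$, $\gamma_{iu}\in\mathcal{K}$ ($i,j\in\mathbb{N}$) such that: (1) $\underline\omega_i(|\xi_i|_{\mathcal{A}_i})\le W_i(\xi_i)\le\overline\omega_i(|\xi_i|_{\mathcal{A}_i})$ for all $i$ and $\xi_i\in\mathbb{R}^{n_i}$; (2) $W_i(x_i(M,\xi,u))\le\max\{\sup_{j\in\mathbb{N}}\gamma_{ij}(W_j(\xi_j)),\gamma_{iu}(\|u\|_\infty)\}$ for all $i$, $\xi\in X$, $u\in\mathcal{U}$; (3) there exist $\underline\omega,\overline\omega\in\mathcal{K}_\infty$ with $\underline\omega\le\underline\omega_i\le\overline\omega_i\le\overline\omega$ for all $i$, $\alpha\in\mathcal{K}_\infty$ with $\alpha(s)<s$ for $s>0$ and $\gamma_{ij}\le\alpha$ for all $i,j$, and $\bar\gamma_u\in\mathcal{K}$ with $\gamma_{iu}\le\bar\gamma_u$ for all $i$.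
   Context: For each $i\in\mathbb{N}$ fix positive integers $n_i,p_i$, norms on $\mathbb{R}^{n_i},\mathbb{R}^{p_i}$, a finite set $I_i\subset\mathbb{N}\setminus\{i\}$ with every $\{j: i\in I_j\}$ finite, and continuous $f_i:\mathbb{R}^{n_i}\times\prod_{j\in I_i}\mathbb{R}^{n_j}\times\mathbb{R}^{p_i}\to\mathbb{R}^{n_i}$. $X$ (resp. $U$) the spaces of sequences $(x_i)$, $x_i\in\mathbb{R}^{n_i}$ (resp. $(u_i)$, $u_i\in\mathbb{R}^{p_i}$) with finite norm $|x|_\infty=\sup_i|x_i|$. $f(x,u)_i=f_i(x_i,(x_j)_{j\in I_i},u_i)$; network $\Sigma$: $x(k+1)=f(x(k),u(k))$; well-posed means $f(X\times U)\subset X$. $\mathcal{U}$: sequences $u:\mathbb{N}_0\to U$ with $\|u\|_\infty=\sup_k|u(k)|_\infty<\infty$; $x(k,\xi,u)$ the solution with $x(0)=\xi$, $x_i(k,\xi,u)$ its $i$-th component. $|z|_{\mathcal{A}_i}=\inf_{y\in\mathcal{A}_i}|z-y|$, $|x|_{\mathcal{A}}=\inf_{y\in\mathcal{A}}|x-y|_\infty$. $\Sigma$ is eISS w.r.t. $\mathcal{A}$ ($\mathcal{A}$ nonempty) if there exist $C\ge1$, $\rho\in[0,1)$, $\gamma\in\mathcal{K}$ with $|x(k,\xi,u)|_{\mathcal{A}}\le\max\{C\rho^k|\xi|_{\mathcal{A}},\gamma(\|u\|_\infty)\}$ for all $\xi\in X$, $u\in\mathcal{U}$, $k\in\mathbb{N}_0$.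 $\mathcal{K},\mathcal{K}_\infty$ standard comparison classes. *)

theory Defs
  imports "HOL-Analysis.Analysis"
begin

text \<open>Vectors of R^m are modelled as functions nat => real vanishing outside {0..<m}.
  States are sequences nat => (nat => real), inputs likewise.\<close>

definition Rn :: "nat \<Rightarrow> (nat \<Rightarrow> real) set" where
  "Rn m = {v. \<forall>k\<ge>m. v k = 0}"

definition is_norm_on :: "(nat \<Rightarrow> real) set \<Rightarrow> ((nat \<Rightarrow> real) \<Rightarrow> real) \<Rightarrow> bool" where
  "is_norm_on V N \<longleftrightarrow>
     (\<forall>v\<in>V. 0 \<le> N v) \<and> (\<forall>v\<in>V. N v = 0 \<longleftrightarrow> v = (\<lambda>k. 0)) \<and>
     (\<forall>v\<in>V. \<forall>c::real. N (\<lambda>k. c * v k) = \<bar>c\<bar> * N v) \<and>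
     (\<forall>v\<in>V. \<forall>w\<in>V. N (\<lambda>k. v k + w k) \<le> N v + N w)"

definition classK :: "(real \<Rightarrow> real) \<Rightarrow> bool" where
  "classK g \<longleftrightarrow> continuous_on {0..} g \<and> g 0 = 0 \<and> strict_mono_on {0..} g"

definition classKinf :: "(real \<Rightarrow> real) \<Rightarrow> bool" where
  "classKinf g \<longleftrightarrow> classK g \<and> filterlim g at_top at_top"

definition zero_fun_on :: "(real \<Rightarrow> real) \<Rightarrow> bool" where
  "zero_fun_on g \<longleftrightarrow> (\<forall>s\<ge>0. g s = 0)"

definition supnorm :: "(nat \<Rightarrow> (nat \<Rightarrow> real) \<Rightarrow> real) \<Rightarrow> (nat \<Rightarrow> nat \<Rightarrow> real) \<Rightarrow> real" where
  "supnorm N x = (SUP i. N i (x i))"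

definition seqspace :: "(nat \<Rightarrow> nat) \<Rightarrow> (nat \<Rightarrow> (nat \<Rightarrow> real) \<Rightarrow> real) \<Rightarrow> (nat \<Rightarrow> nat \<Rightarrow> real) set" where
  "seqspace d N = {x. (\<forall>i. x i \<in> Rn (d i)) \<and> bdd_above (range (\<lambda>i. N i (x i)))}"

text \<open>Standing assumptions on the network. f i x v is f_i evaluated at
  (x_i, (x_j)_{j in I_i}, v), where v plays the role of u_i; locality says it depends only on those
  components of x.\<close>
definition network ::
  "(nat \<Rightarrow> nat) \<Rightarrow> (nat \<Rightarrow> nat) \<Rightarrow> (nat \<Rightarrow> (nat \<Rightarrow> real) \<Rightarrow> real) \<Rightarrow> (nat \<Rightarrow> (nat \<Rightarrow> real) \<Rightarrow> real)
   \<Rightarrow> (nat \<Rightarrow> nat set) \<Rightarrow> (nat \<Rightarrow> (nat \<Rightarrow> nat \<Rightarrow> real) \<Rightarrow> (nat \<Rightarrow> real) \<Rightarrow> (nat \<Rightarrow> real)) \<Rightarrow> bool" where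
  "network n p Nx Nu I f \<longleftrightarrow>
     (\<forall>i. 0 < n i \<and> 0 < p i) \<and>
     (\<forall>i. is_norm_on (Rn (n i)) (Nx i) \<and> is_norm_on (Rn (p i)) (Nu i)) \<and>
     (\<forall>i. finite (I i) \<and> i \<notin> I i \<and> finite {j. i \<in> I j}) \<and>
     (\<forall>i x y v. x i = y i \<and> (\<forall>j\<in>I i. x j = y j) \<longrightarrow> f i x v = f i y v) \<and>
     (\<forall>i x v. (\<forall>j. x j \<in> Rn (n j)) \<and> v \<in> Rn (p i) \<longrightarrow> f i x v \<in> Rn (n i)) \<and>
     (\<forall>i. continuous_on {(x, v). (\<forall>j. x j \<in> Rn (n j)) \<and> v \<in> Rn (p i)} (\<lambda>(x, v). f i x v))"

definition well_posed where
  "well_posed n p Nx Nu f \<longleftrightarrow>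
     (\<forall>x\<in>seqspace n Nx. \<forall>u\<in>seqspace p Nu. (\<lambda>i. f i x (u i)) \<in> seqspace n Nx)"

text \<open>Admissible inputs: u k i is u_i(k).\<close>
definition inputs where
  "inputs p Nu = {u :: nat \<Rightarrow> nat \<Rightarrow> nat \<Rightarrow> real.
      (\<forall>k. u k \<in> seqspace p Nu) \<and> bdd_above (range (\<lambda>k. supnorm Nu (u k)))}"

definition inorm where
  "inorm Nu u = (SUP k. supnorm Nu (u k))"

primrec traj :: "(nat \<Rightarrow> (nat \<Rightarrow> nat \<Rightarrow> real) \<Rightarrow> (nat \<Rightarrow> real) \<Rightarrow> (nat \<Rightarrow> real))
   \<Rightarrow> (nat \<Rightarrow> nat \<Rightarrow> real) \<Rightarrow> (nat \<Rightarrow> nat \<Rightarrow> nat \<Rightarrow> real) \<Rightarrow> nat \<Rightarrow> nat \<Rightarrow> nat \<Rightarrow> real" where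
  "traj f \<xi> u 0 = \<xi>"
| "traj f \<xi> u (Suc k) = (\<lambda>i. f i (traj f \<xi> u k) (u k i))"

definition cdist :: "((nat \<Rightarrow> real) \<Rightarrow> real) \<Rightarrow> (nat \<Rightarrow> real) set \<Rightarrow> (nat \<Rightarrow> real) \<Rightarrow> real" where
  "cdist N A z = (INF y\<in>A. N (\<lambda>k. z k - y k))"

definition sdist where
  "sdist Nx AA x = (INF y\<in>AA. supnorm Nx (\<lambda>i k. x i k - y i k))"

definition prodset where
  "prodset n Nx A = {x \<in> seqspace n Nx. \<forall>i. x i \<in> A i}"

definition eISS where
  "eISS n p Nx Nu f AA \<longleftrightarrow> AA \<noteq> {} \<and>
     (\<exists>C \<rho> \<gamma>. C \<ge> 1 \<and> 0 \<le> \<rho> \<and> \<rho> < 1 \<and> classK \<gamma> \<and>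
        (\<forall>\<xi>\<in>seqspace n Nx. \<forall>u\<in>inputs p Nu. \<forall>k.
           sdist Nx AA (traj f \<xi> u k) \<le> max (C * \<rho> ^ k * sdist Nx AA \<xi>) (\<gamma> (inorm Nu u))))"

end

theory Submission imports Defs begin

lemma Rn_diff: "v \<in> Rn m \<Longrightarrow> w \<in> Rn m \<Longrightarrow> (\<lambda>k. v k - w k) \<in> Rn m"
  by (simp add: Rn_def)
lemma Rn_add: "v \<in> Rn m \<Longrightarrow> w \<in> Rn m \<Longrightarrow> (\<lambda>k. v k + w k) \<in> Rn m"
  by (simp add: Rn_def)
lemma Rn_scale: "v \<in> Rn m \<Longrightarrow> (\<lambda>k. c * v k) \<in> Rn m"
  by (simp add: Rn_def)
lemma Rn_zero: "(\<lambda>k. 0) \<in> Rn m"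
  by (simp add: Rn_def)

locale nrm =
  fixes m :: nat and N :: "(nat \<Rightarrow> real) \<Rightarrow> real"
  assumes isn: "is_norm_on (Rn m) N"
begin

lemma nonneg: "v \<in> Rn m \<Longrightarrow> 0 \<le> N v"
  using isn by (simp add: is_norm_on_def)
lemma zero: "N (\<lambda>k. 0) = 0"
  using isn Rn_zero by (simp add: is_norm_on_def)
lemma scale: "v \<in> Rn m \<Longrightarrow> N (\<lambda>k. c * v k) = \<bar>c\<bar> * N v"
  using isn by (simp add: is_norm_on_def)
lemma tri: "v \<in> Rn m \<Longrightarrow> w \<in> Rn m \<Longrightarrow> N (\<lambda>k. v k + w k) \<le> N v + N w"
  using isn by (simp add: is_norm_on_def)
lemma diff_sym: "v \<in> Rn m \<Longrightarrow> w \<in> Rn m \<Longrightarrow> N (\<lambda>k. v k - w k) = N (\<lambda>k. w k - v k)"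
proof -
  assume a: "v \<in> Rn m" "w \<in> Rn m"
  have "N (\<lambda>k. -1 * (v k - w k)) = N (\<lambda>k. v k - w k)"
    using scale[OF Rn_diff[OF a], of "-1"] by simp
  moreover have "(\<lambda>k. -1 * (v k - w k)) = (\<lambda>k. w k - v k)" by auto
  ultimately show ?thesis by simp
qed
lemma diff_tri: "v \<in> Rn m \<Longrightarrow> w \<in> Rn m \<Longrightarrow> u \<in> Rn m \<Longrightarrow>
   N (\<lambda>k. v k - w k) \<le> N (\<lambda>k. v k - u k) + N (\<lambda>k. u k - w k)"
proof -
  assume a: "v \<in> Rn m" "w \<in> Rn m" "u \<in> Rn m"
  have "(\<lambda>k. v k - w k) = (\<lambda>k. (v k - u k) + (u k - w k))" by auto
  then show ?thesis using tri[OF Rn_diff[OF a(1) a(3)] Rn_diff[OF a(3) a(2)]] by simp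
qed
lemma diff_le: "v \<in> Rn m \<Longrightarrow> w \<in> Rn m \<Longrightarrow> N (\<lambda>k. v k - w k) \<le> N v + N w"
proof -
  assume a: "v \<in> Rn m" "w \<in> Rn m"
  have 1: "N (\<lambda>k. v k + -1 * w k) \<le> N v + N (\<lambda>k. -1 * w k)" by (rule tri[OF a(1) Rn_scale[OF a(2)]])
  have 2: "N (\<lambda>k. -1 * w k) = N w" using scale[OF a(2), of "-1"] by simp
  have 3: "(\<lambda>k. v k + -1 * w k) = (\<lambda>k. v k - w k)" by auto
  show ?thesis using 1 unfolding 3 2 .
qed

definition e :: "nat \<Rightarrow> nat \<Rightarrow> real" where "e j = (\<lambda>k. if k = j then 1 else 0)"

lemma bound_aux: "j \<le> m \<Longrightarrow> (\<forall>k\<ge>j. v k = 0) \<Longrightarrow> N v \<le> (\<Sum>k<j. \<bar>v k\<bar> * N (e k))"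
proof (induction j arbitrary: v)
  case 0
  then have "v = (\<lambda>k. 0)" by auto
  then show ?case using zero by simp
next
  case (Suc j)
  define v' where "v' = v(j := 0)"
  have ej: "e j \<in> Rn m" using Suc.prems(1) by (auto simp: Rn_def e_def)
  have v'R: "v' \<in> Rn m" using Suc.prems by (auto simp: Rn_def v'_def)
  have veq: "v = (\<lambda>k. v' k + v j * e j k)" by (auto simp: v'_def e_def)
  have "N v \<le> N v' + N (\<lambda>k. v j * e j k)"
    using tri[OF v'R Rn_scale[OF ej]] veq by metis
  also have "\<dots> = N v' + \<bar>v j\<bar> * N (e j)" using scale[OF ej] by simp
  also have "N v' \<le> (\<Sum>k<j. \<bar>v' k\<bar> * N (e k))"
  proof (rule Suc.IH)
    show "j \<le> m" using Suc.prems(1) by simp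
    show "\<forall>k\<ge>j. v' k = 0" using Suc.prems(2) by (auto simp: v'_def)
  qed
  also have "(\<Sum>k<j. \<bar>v' k\<bar> * N (e k)) = (\<Sum>k<j. \<bar>v k\<bar> * N (e k))"
    by (auto simp: v'_def intro!: sum.cong)
  finally show ?case by simp
qed

lemma bound: "v \<in> Rn m \<Longrightarrow> N v \<le> (\<Sum>k<m. \<bar>v k\<bar> * N (e k))"
  using bound_aux[of m v] by (auto simp: Rn_def)

end

locale ndist = nrm +
  fixes A :: "(nat \<Rightarrow> real) set"
  assumes Asub: "A \<subseteq> Rn m" and Ane: "A \<noteq> {}"
begin

lemma bddb: "z \<in> Rn m \<Longrightarrow> bdd_below ((\<lambda>y. N (\<lambda>k. z k - y k)) ` A)"
  using Asub by (auto intro!: bdd_belowI[of _ 0] nonneg Rn_diff)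

lemma cd_nonneg: "z \<in> Rn m \<Longrightarrow> 0 \<le> cdist N A z"
  unfolding cdist_def using Asub Ane by (auto intro!: cINF_greatest nonneg Rn_diff)

lemma cd_le: "z \<in> Rn m \<Longrightarrow> y \<in> A \<Longrightarrow> cdist N A z \<le> N (\<lambda>k. z k - y k)"
  unfolding cdist_def using bddb by (auto intro!: cINF_lower)

lemma cd_lip: "z \<in> Rn m \<Longrightarrow> w \<in> Rn m \<Longrightarrow> cdist N A z \<le> cdist N A w + N (\<lambda>k. z k - w k)"
proof -
  assume a: "z \<in> Rn m" "w \<in> Rn m"
  have "cdist N A z - N (\<lambda>k. z k - w k) \<le> cdist N A w"
    unfolding cdist_def[of N A w]
  proof (rule cINF_greatest[OF Ane])
    fix y assume y: "y \<in> A"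
    then have yR: "y \<in> Rn m" using Asub by auto
    have "cdist N A z \<le> N (\<lambda>k. z k - y k)" by (rule cd_le[OF a(1) y])
    also have "\<dots> \<le> N (\<lambda>k. z k - w k) + N (\<lambda>k. w k - y k)" by (rule diff_tri[OF a(1) yR a(2)])
    finally show "cdist N A z - N (\<lambda>k. z k - w k) \<le> N (\<lambda>k. w k - y k)" by simp
  qed
  then show ?thesis by simp
qed

lemma cd_cont: "continuous_on (Rn m) (cdist N A)"
proof -
  have main: "(cdist N A \<longlongrightarrow> cdist N A z) (at z within Rn m)" if z: "z \<in> Rn m" for z
  proof -
  have comp: "((\<lambda>w. w k) \<longlongrightarrow> z k) (at z within Rn m)" for k
  proof -
    have "continuous_on (Rn m) (\<lambda>w::nat\<Rightarrow>real. w k)"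
      by (rule continuous_on_subset[OF continuous_on_product_coordinates[of k]]) simp
    then show ?thesis using z unfolding continuous_on_def by blast
  qed
  define g where "g w = (\<Sum>k<m. \<bar>w k - z k\<bar> * N (e k))" for w
  have tk: "((\<lambda>w. \<bar>w k - z k\<bar> * N (e k)) \<longlongrightarrow> 0) (at z within Rn m)" for k
    using tendsto_mult_right[OF tendsto_rabs[OF tendsto_diff[OF comp[of k] tendsto_const[of "z k"]]], of "N (e k)"] by simp
  have "(g \<longlongrightarrow> (\<Sum>k<m. 0)) (at z within Rn m)"
    unfolding g_def by (rule tendsto_sum[OF tk])
  then have g0: "(g \<longlongrightarrow> 0) (at z within Rn m)" by simp
  have ev: "eventually (\<lambda>w. norm (cdist N A w - cdist N A z) \<le> g w) (at z within Rn m)"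
    unfolding eventually_at_filter
  proof (intro always_eventually allI impI)
    fix w assume w: "w \<in> Rn m"
    have "\<bar>cdist N A w - cdist N A z\<bar> \<le> N (\<lambda>k. w k - z k)"
      using cd_lip[OF w z] cd_lip[OF z w] diff_sym[OF w z] by linarith
    also have "\<dots> \<le> g w" unfolding g_def using bound[OF Rn_diff[OF w z]] .
    finally show "norm (cdist N A w - cdist N A z) \<le> g w" by simp
  qed
  have "((\<lambda>w. cdist N A w - cdist N A z) \<longlongrightarrow> 0) (at z within Rn m)"
    by (rule Lim_null_comparison[OF ev g0])
  then show "(cdist N A \<longlongrightarrow> cdist N A z) (at z within Rn m)"
    by (simp add: LIM_zero_iff)
  qed
  then show ?thesis unfolding continuous_on_def by blast
qed

end

lemma nrmI: "is_norm_on (Rn m) N \<Longrightarrow> nrm m N"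
  by (simp add: nrm_def)

lemma ndistI: "is_norm_on (Rn m) N \<Longrightarrow> A \<subseteq> Rn m \<Longrightarrow> A \<noteq> {} \<Longrightarrow> ndist m N A"
  by (simp add: ndist_def nrm_def ndist_axioms_def)

lemma classK_id: "classKinf (\<lambda>s. s)"
  unfolding classKinf_def classK_def
  by (auto simp: strict_mono_on_def filterlim_ident continuous_on_id)

lemma classK_half: "classKinf (\<lambda>s. s / 2)"
  unfolding classKinf_def classK_def
proof (intro conjI)
  show "continuous_on {0..} (\<lambda>s::real. s / 2)" by (intro continuous_intros) auto
  show "strict_mono_on {0..} (\<lambda>s::real. s / 2)" by (auto simp: strict_mono_on_def)
  show "filterlim (\<lambda>s::real. s / 2) at_top at_top"
    unfolding filterlim_at_top eventually_at_top_linorder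
    by (metis divide_right_mono le_divide_eq_numeral1(1) zero_less_numeral order.refl)
qed simp

lemma ss_bdd:
  assumes nx: "\<And>i. is_norm_on (Rn (n i)) (Nx i)" and x: "x \<in> seqspace n Nx" and y: "y \<in> seqspace n Nx"
  shows "bdd_above (range (\<lambda>j. Nx j (\<lambda>k. x j k - y j k)))"
proof -
  obtain Bx where Bx: "\<forall>j. Nx j (x j) \<le> Bx" using x unfolding seqspace_def bdd_above_def by auto
  obtain By where By: "\<forall>j. Nx j (y j) \<le> By" using y unfolding seqspace_def bdd_above_def by auto
  have "Nx j (\<lambda>k. x j k - y j k) \<le> Bx + By" for j
    using nrm.diff_le[OF nrmI[OF nx], of "x j" j "y j"] x y Bx By unfolding seqspace_def
    by (smt (verit) mem_Collect_eq)
  then show ?thesis by (intro bdd_aboveI2) 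
qed

lemma ss_le_sup:
  assumes nx: "\<And>i. is_norm_on (Rn (n i)) (Nx i)" and x: "x \<in> seqspace n Nx" and y: "y \<in> seqspace n Nx"
  shows "Nx j (\<lambda>k. x j k - y j k) \<le> supnorm Nx (\<lambda>i k. x i k - y i k)"
  unfolding supnorm_def using ss_bdd[OF nx x y] by (auto intro!: cSUP_upper)

lemma supnorm_nonneg:
  assumes nx: "\<And>i. is_norm_on (Rn (n i)) (Nx i)" and x: "x \<in> seqspace n Nx" and y: "y \<in> seqspace n Nx"
  shows "0 \<le> supnorm Nx (\<lambda>i k. x i k - y i k)"
proof -
  have "0 \<le> Nx 0 (\<lambda>k. x 0 k - y 0 k)"
    using x y by (intro nrm.nonneg[OF nrmI[OF nx]] Rn_diff) (auto simp: seqspace_def)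
  then show ?thesis using ss_le_sup[OF nx x y, of 0] by linarith
qed

lemma prodset_ss: "y \<in> prodset n Nx A \<Longrightarrow> y \<in> seqspace n Nx"
  by (simp add: prodset_def)

lemma sd_nonneg:
  assumes nx: "\<And>i. is_norm_on (Rn (n i)) (Nx i)" and x: "x \<in> seqspace n Nx" and ne: "prodset n Nx A \<noteq> {}"
  shows "0 \<le> sdist Nx (prodset n Nx A) x"
  unfolding sdist_def using ne by (auto intro!: cINF_greatest supnorm_nonneg[OF nx x] prodset_ss)

lemma sd_bddb:
  assumes nx: "\<And>i. is_norm_on (Rn (n i)) (Nx i)" and x: "x \<in> seqspace n Nx"
  shows "bdd_below ((\<lambda>y. supnorm Nx (\<lambda>i k. x i k - y i k)) ` prodset n Nx A)"
  by (auto intro!: bdd_belowI[of _ 0] supnorm_nonneg[OF nx x] prodset_ss)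

lemma cd_le_sd:
  assumes nx: "\<And>i. is_norm_on (Rn (n i)) (Nx i)" and Asub: "\<And>i. A i \<subseteq> Rn (n i)"
    and Ane: "\<And>i. A i \<noteq> {}" and ne: "prodset n Nx A \<noteq> {}" and x: "x \<in> seqspace n Nx"
  shows "cdist (Nx i) (A i) (x i) \<le> sdist Nx (prodset n Nx A) x"
  unfolding sdist_def
proof (rule cINF_greatest[OF ne])
  fix y assume y: "y \<in> prodset n Nx A"
  have "cdist (Nx i) (A i) (x i) \<le> Nx i (\<lambda>k. x i k - y i k)"
    using ndist.cd_le[OF ndistI[OF nx Asub Ane]] x y by (auto simp: seqspace_def prodset_def)
  also have "\<dots> \<le> supnorm Nx (\<lambda>i k. x i k - y i k)"
    by (rule ss_le_sup[OF nx x prodset_ss[OF y]])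
  finally show "cdist (Nx i) (A i) (x i) \<le> supnorm Nx (\<lambda>i k. x i k - y i k)" .
qed

lemma cd_bdd:
  assumes nx: "\<And>i. is_norm_on (Rn (n i)) (Nx i)" and Asub: "\<And>i. A i \<subseteq> Rn (n i)"
    and Ane: "\<And>i. A i \<noteq> {}" and ne: "prodset n Nx A \<noteq> {}" and x: "x \<in> seqspace n Nx"
  shows "bdd_above (range (\<lambda>j. cdist (Nx j) (A j) (x j)))"
  using cd_le_sd[OF nx Asub Ane ne x] by (intro bdd_aboveI2) 

lemma sd_le:
  assumes nx: "\<And>i. is_norm_on (Rn (n i)) (Nx i)" and Asub: "\<And>i. A i \<subseteq> Rn (n i)"
    and Ane: "\<And>i. A i \<noteq> {}" and ne: "prodset n Nx A \<noteq> {}" and x: "x \<in> seqspace n Nx"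
  shows "sdist Nx (prodset n Nx A) x \<le> (SUP j. cdist (Nx j) (A j) (x j))"
proof (rule field_le_epsilon)
  fix e :: real assume e: "0 < e"
  define S where "S = (SUP j. cdist (Nx j) (A j) (x j))"
  have bdd: "bdd_above (range (\<lambda>j. cdist (Nx j) (A j) (x j)))" by (rule cd_bdd[OF nx Asub Ane ne x])
  have cS: "cdist (Nx j) (A j) (x j) \<le> S" for j unfolding S_def using bdd by (auto intro!: cSUP_upper)
  have xR: "x j \<in> Rn (n j)" for j using x by (simp add: seqspace_def)
  have "\<exists>y\<in>A j. Nx j (\<lambda>k. x j k - y k) < cdist (Nx j) (A j) (x j) + e" for j
  proof -
    have "Inf ((\<lambda>y. Nx j (\<lambda>k. x j k - y k)) ` A j) < cdist (Nx j) (A j) (x j) + e"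
      using e by (simp add: cdist_def)
    then show ?thesis using cInf_lessD[of "(\<lambda>y. Nx j (\<lambda>k. x j k - y k)) ` A j"] Ane[of j] by auto
  qed
  then obtain y where y: "\<And>j. y j \<in> A j" and yd: "\<And>j. Nx j (\<lambda>k. x j k - y j k) < cdist (Nx j) (A j) (x j) + e"
    by metis
  have yR: "y j \<in> Rn (n j)" for j using y Asub by auto
  obtain Bx where Bx: "\<forall>j. Nx j (x j) \<le> Bx" using x unfolding seqspace_def bdd_above_def by auto
  have "Nx j (y j) \<le> Bx + S + e" for j
  proof -
    have eq: "y j = (\<lambda>k. x j k + (y j k - x j k))" by auto
    have "Nx j (y j) \<le> Nx j (x j) + Nx j (\<lambda>k. y j k - x j k)"
      using nrm.tri[OF nrmI[OF nx] xR Rn_diff[OF yR xR]] eq by metis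
    also have "Nx j (\<lambda>k. y j k - x j k) = Nx j (\<lambda>k. x j k - y j k)"
      using nrm.diff_sym[OF nrmI[OF nx] yR xR] .
    finally show ?thesis using Bx yd[of j] cS[of j] by smt
  qed
  then have ys: "y \<in> prodset n Nx A"
    unfolding prodset_def seqspace_def using y yR by (auto intro!: bdd_aboveI2)
  have "sdist Nx (prodset n Nx A) x \<le> supnorm Nx (\<lambda>i k. x i k - y i k)"
    unfolding sdist_def using sd_bddb[OF nx x] ys by (rule cINF_lower)
  also have "\<dots> \<le> S + e"
    unfolding supnorm_def
  proof (rule cSUP_least)
    show "UNIV \<noteq> {}" by simp
    fix j show "Nx j (\<lambda>k. x j k - y j k) \<le> S + e" using yd[of j] cS[of j] by linarith
  qed
  finally show "sdist Nx (prodset n Nx A) x \<le> (SUP j. cdist (Nx j) (A j) (x j)) + e" by (simp add: S_def)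
qed

lemma traj_ss:
  assumes wp: "well_posed n p Nx Nu f" and u: "u \<in> inputs p Nu" and xi: "\<xi> \<in> seqspace n Nx"
  shows "traj f \<xi> u k \<in> seqspace n Nx"
proof (induction k)
  case 0 then show ?case using xi by simp
next
  case (Suc k)
  have "u k \<in> seqspace p Nu" using u by (simp add: inputs_def)
  then show ?case using Suc wp by (simp add: well_posed_def)
qed


theorem theorem3:
  fixes n p :: "nat \<Rightarrow> nat"
    and Nx Nu :: "nat \<Rightarrow> (nat \<Rightarrow> real) \<Rightarrow> real"
    and I :: "nat \<Rightarrow> nat set"
    and f :: "nat \<Rightarrow> (nat \<Rightarrow> nat \<Rightarrow> real) \<Rightarrow> (nat \<Rightarrow> real) \<Rightarrow> (nat \<Rightarrow> real)"
    and A :: "nat \<Rightarrow> (nat \<Rightarrow> real) set"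
  assumes net: "network n p Nx Nu I f"
    and wp: "well_posed n p Nx Nu f"
    and A_sub: "\<And>i. A i \<subseteq> Rn (n i)"
    and A_ne: "\<And>i. A i \<noteq> {}"
    and A_closed: "\<And>i. closed (A i)"
    and eiss: "eISS n p Nx Nu f (prodset n Nx A)"
  shows "\<exists>M::nat. \<exists>W :: nat \<Rightarrow> (nat \<Rightarrow> real) \<Rightarrow> real.
    \<exists>wl wu :: nat \<Rightarrow> real \<Rightarrow> real. \<exists>g :: nat \<Rightarrow> nat \<Rightarrow> real \<Rightarrow> real. \<exists>gu :: nat \<Rightarrow> real \<Rightarrow> real.
      M \<ge> 1 \<and>
      (\<forall>i. continuous_on (Rn (n i)) (W i) \<and> (\<forall>z\<in>Rn (n i). 0 \<le> W i z)) \<and>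
      (\<forall>i. classKinf (wl i) \<and> classKinf (wu i) \<and> classK (gu i)) \<and>
      (\<forall>i j. classKinf (g i j) \<or> zero_fun_on (g i j)) \<and>
      (\<forall>i. \<forall>z\<in>Rn (n i). wl i (cdist (Nx i) (A i) z) \<le> W i z
                          \<and> W i z \<le> wu i (cdist (Nx i) (A i) z)) \<and>
      (\<forall>i. \<forall>\<xi>\<in>seqspace n Nx. \<forall>u\<in>inputs p Nu.
          W i (traj f \<xi> u M i) \<le> max (SUP j. g i j (W j (\<xi> j))) (gu i (inorm Nu u))) \<and>
      (\<exists>wl0 wu0 \<alpha> gubar. classKinf wl0 \<and> classKinf wu0 \<and> classKinf \<alpha> \<and> classK gubar \<and>
         (\<forall>i. \<forall>s\<ge>0. wl0 s \<le> wl i s \<and> wl i s \<le> wu i s \<and> wu i s \<le> wu0 s) \<and>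
         (\<forall>s>0. \<alpha> s < s) \<and>
         (\<forall>i j. \<forall>s\<ge>0. g i j s \<le> \<alpha> s) \<and>
         (\<forall>i. \<forall>s\<ge>0. gu i s \<le> gubar s))"
proof -
  have nx: "\<And>i. is_norm_on (Rn (n i)) (Nx i)" using net by (simp add: network_def)
  define AA where "AA = prodset n Nx A"
  have ne: "AA \<noteq> {}" using eiss by (simp add: eISS_def AA_def)
  obtain C \<rho> \<gamma> where C: "C \<ge> 1" and r0: "0 \<le> \<rho>" and r1: "\<rho> < 1" and gK: "classK \<gamma>"
    and bnd: "\<And>\<xi> u k. \<xi> \<in> seqspace n Nx \<Longrightarrow> u \<in> inputs p Nu \<Longrightarrow>
           sdist Nx AA (traj f \<xi> u k) \<le> max (C * \<rho> ^ k * sdist Nx AA \<xi>) (\<gamma> (inorm Nu u))"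
    using eiss unfolding eISS_def AA_def by blast
  have "(\<lambda>k. C * \<rho> ^ k) \<longlonglongrightarrow> 0"
    using tendsto_mult_right_zero[OF LIMSEQ_power_zero[of \<rho>]] r0 r1 by simp
  then have "eventually (\<lambda>k. C * \<rho> ^ k < 1/2) sequentially"
    by (rule order_tendstoD) simp
  then obtain M0 where M0: "\<And>k. k \<ge> M0 \<Longrightarrow> C * \<rho> ^ k < 1/2"
    unfolding eventually_sequentially by blast
  define M where "M = max 1 M0"
  have M1: "M \<ge> 1" by (simp add: M_def)
  have CM: "C * \<rho> ^ M \<le> 1/2" using M0[of M] by (simp add: M_def)
  have decay: "cdist (Nx i) (A i) (traj f \<xi> u M i)
      \<le> max (SUP j. cdist (Nx j) (A j) (\<xi> j) / 2) (\<gamma> (inorm Nu u))"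
    if xi: "\<xi> \<in> seqspace n Nx" and u: "u \<in> inputs p Nu" for i \<xi> u
  proof -
    have xs: "traj f \<xi> u M \<in> seqspace n Nx" by (rule traj_ss[OF wp u xi])
    have s0: "0 \<le> sdist Nx AA \<xi>" unfolding AA_def by (rule sd_nonneg[OF nx xi ne[unfolded AA_def]])
    have bdd: "bdd_above (range (\<lambda>j. cdist (Nx j) (A j) (\<xi> j)))"
      by (rule cd_bdd[OF nx A_sub A_ne ne[unfolded AA_def] xi])
    then obtain B where B: "\<And>j. cdist (Nx j) (A j) (\<xi> j) \<le> B" unfolding bdd_above_def by auto
    have bdd2: "bdd_above (range (\<lambda>j. cdist (Nx j) (A j) (\<xi> j) / 2))"
      using B by (intro bdd_aboveI2[of _ _ "B/2"]) (simp add: divide_right_mono)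
    have sup2: "(SUP j. cdist (Nx j) (A j) (\<xi> j)) \<le> 2 * (SUP j. cdist (Nx j) (A j) (\<xi> j) / 2)"
    proof (rule cSUP_least)
      show "UNIV \<noteq> {}" by simp
      fix j
      have "cdist (Nx j) (A j) (\<xi> j) / 2 \<le> (SUP j. cdist (Nx j) (A j) (\<xi> j) / 2)"
        using bdd2 by (rule cSUP_upper[rotated]) simp
      then show "cdist (Nx j) (A j) (\<xi> j) \<le> 2 * (SUP j. cdist (Nx j) (A j) (\<xi> j) / 2)" by simp
    qed
    have h1: "cdist (Nx i) (A i) (traj f \<xi> u M i) \<le> sdist Nx AA (traj f \<xi> u M)"
      unfolding AA_def by (rule cd_le_sd[OF nx A_sub A_ne ne[unfolded AA_def] xs])
    have h2: "sdist Nx AA (traj f \<xi> u M) \<le> max (C * \<rho> ^ M * sdist Nx AA \<xi>) (\<gamma> (inorm Nu u))" by (rule bnd[OF xi u])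
    have h3: "C * \<rho> ^ M * sdist Nx AA \<xi> \<le> sdist Nx AA \<xi> / 2"
      using mult_right_mono[OF CM s0] by simp
    have h4: "sdist Nx AA \<xi> \<le> (SUP j. cdist (Nx j) (A j) (\<xi> j))"
      unfolding AA_def by (rule sd_le[OF nx A_sub A_ne ne[unfolded AA_def] xi])
    have "C * \<rho> ^ M * sdist Nx AA \<xi> \<le> (SUP j. cdist (Nx j) (A j) (\<xi> j) / 2)"
      using h3 h4 sup2 by linarith
    then show ?thesis using h1 h2 by linarith
  qed
  show ?thesis
    apply (rule exI[of _ M], rule exI[of _ "\<lambda>i. cdist (Nx i) (A i)"],
        rule exI[of _ "\<lambda>i s. s"], rule exI[of _ "\<lambda>i s. s"], rule exI[of _ "\<lambda>i j s. s / 2"],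
        rule exI[of _ "\<lambda>i. \<gamma>"])
    apply (intro conjI allI ballI)
    using M1 apply simp
    using ndist.cd_cont[OF ndistI[OF nx A_sub A_ne]] apply simp
    using ndist.cd_nonneg[OF ndistI[OF nx A_sub A_ne]] apply simp
    using classK_id apply simp
    using classK_id apply simp
    using gK apply simp
    using classK_half apply simp
    apply simp
    apply simp
    using decay apply simp
    apply (rule exI[of _ "\<lambda>s. s"], rule exI[of _ "\<lambda>s. s"], rule exI[of _ "\<lambda>s. s / 2"], rule exI[of _ \<gamma>])
    using classK_id classK_half gK by auto
qed

end
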